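(* Let $h_1,\dots,h_{n-k}$ be the generators of a valid rate-$k/n$ quantum convolutional code and suppose its memory commutativity matrix $\Omega$ has full rank over $\mathbb{F}_2$. Let $m=\dim(\Omega)-\frac12\mathrm{rank}(\Omega)$, let $g_{i,j}$ be $m$-qubit Pauli operators with $g_{i,j}\odot g_{i',j'}=[\Omega]_{(i,j),(i',j')}$, and let $U$ be any Clifford unitary on $m+n$ qubits implementing the encoding transformation with these memory operators. Then $U$ is non-catastrophic.
   Context: Pauli operators are considered up to phase; $A\odot B\in\{0,1\}$ is $1$ iff $A,B$ anticommute, additive mod 2 over tensor factors. The weight of a Pauli operator is its number of non-identity tensor factors. A rate-$k/n$ quantum convolutional code is given by $n-k$ generators $h_i=(h_{i,1}|\cdots|h_{i,l_i})$ of $n$-qubit Pauli operators (frames of $n$ qubits) and all their frame shifts; it is valid if all these pairwise commute, i.e. $\sum_r h_{i,r+t}\odot h_{i',r}=0$ for all $i,i',t$ (with $h_{i,j}=I^{\otimes n}$ outside $1\le j\le l_i$). Encoding transformation: a Clifford unitary $U$ acting on $m$ memory, $n-k$ ancilla and $k$ information qubits and outputting $n$ physical and $m$ memory qubits implements it if, for each $1\le i\le n-k$ and $0\le j\le l_i-1$, $U$ maps $g_{i,j}\otimes A_{i,j}\otimes I^{\otimes k}$ to $h_{i,j+1}\otimes g_{i,j+1}$ (up to phase), where $g_{i,0}=g_{i,l_i}=I^{\otimes m}$, $A_{i,0}=Z_i$ (Pauli $Z$ on the $i$-th ancilla), $A_{i,j}=I^{\otimes(n-k)}$ for $j\ge1$,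 and $g_{i,j}$ ($1\le j\le l_i-1$) are $m$-qubit Pauli operators. Memory commutativity matrix $\Omega$: the symmetric binary matrix indexed by $(i,j)$, $1\le i\le n-k$, $1\le j\le l_i-1$, with entries $g_{i,j}\odot g_{i',j'}$, which are forced by consistency of commutation relations and equal, for $j\ge j'$, $\sum_{r\ge1}h_{i,j+r}\odot h_{i',j'+r}$; $\dim(\Omega)$ is its number of rows. State diagram of $U$: a directed multigraph whose vertices are the $m$-qubit Pauli operators (memory states); there is an edge from $M$ to $M'$ labeled $(L,P)$ whenever $U$ maps $M\otimes S^z\otimes L$ to $P\otimes M'$ for some $S^z\in\{I,Z\}^{\otimes(n-k)}$ on the ancillas, $k$-qubit Pauli $L$ on the information qubits and $n$-qubit Pauli $P$ on the physical qubits. The physical (logical) weight of the edge is the weight of $P$ (of $L$). $U$ is catastrophic if its state diagram has a cycle all of whose edges have zero physical weight and at least one edge has nonzero logical weight; otherwise it is non-catastrophic. *)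

theory Defs
  imports "HOL-Library.Z2" "Jordan_Normal_Form.DL_Rank"
begin

text \<open>A Pauli operator up to phase on qubits 0,1,2,... is a function giving, for each qubit,
  its (x,z) bits: (F,F)=I, (T,F)=X, (T,T)=Y, (F,T)=Z.\<close>

type_synonym pauli = "nat \<Rightarrow> bool \<times> bool"

definition pI :: pauli where "pI = (\<lambda>_. (False, False))"

definition is_pauli :: "nat \<Rightarrow> pauli \<Rightarrow> bool" where
  "is_pauli N P \<longleftrightarrow> (\<forall>i. N \<le> i \<longrightarrow> P i = (False, False))"

definition pmul :: "pauli \<Rightarrow> pauli \<Rightarrow> pauli" where
  "pmul P Q = (\<lambda>i. (fst (P i) \<noteq> fst (Q i), snd (P i) \<noteq> snd (Q i)))"

text \<open>Commutation indicator A \<odot> B (0 = commute, 1 = anticommute) for N-qubit operators: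
  parity of the number of tensor factors that anticommute.\<close>
definition sp :: "nat \<Rightarrow> pauli \<Rightarrow> pauli \<Rightarrow> nat" where
  "sp N P Q = card {i. i < N \<and> ((fst (P i) \<and> snd (Q i)) \<noteq> (snd (P i) \<and> fst (Q i)))} mod 2"

definition weight :: "nat \<Rightarrow> pauli \<Rightarrow> nat" where
  "weight N P = card {i. i < N \<and> P i \<noteq> (False, False)}"

definition tensor :: "nat \<Rightarrow> pauli \<Rightarrow> pauli \<Rightarrow> pauli" where
  "tensor N A B = (\<lambda>i. if i < N then A i else B (i - N))"

definition Zop :: "nat \<Rightarrow> pauli" where
  "Zop a = (\<lambda>i. if i = a then (False, True) else (False, False))"

definition is_Zstring :: "nat \<Rightarrow> pauli \<Rightarrow> bool" where
  "is_Zstring N S \<longleftrightarrow> is_pauli N S \<and> (\<forall>i. \<not> fst (S i))"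

text \<open>The action (up to phase) of a Clifford unitary on N qubits: a bijection of the N-qubit
  Pauli operators (mod phase) that respects products and commutation relations
  (a symplectic automorphism of F_2^{2N}); every such map comes from a Clifford unitary
  and vice versa.\<close>
definition clifford :: "nat \<Rightarrow> (pauli \<Rightarrow> pauli) \<Rightarrow> bool" where
  "clifford N U \<longleftrightarrow>
     bij_betw U {P. is_pauli N P} {P. is_pauli N P} \<and>
     (\<forall>P Q. is_pauli N P \<longrightarrow> is_pauli N Q \<longrightarrow> U (pmul P Q) = pmul (U P) (U Q)) \<and>
     (\<forall>P Q. is_pauli N P \<longrightarrow> is_pauli N Q \<longrightarrow> sp N (U P) (U Q) = sp N P Q)"

text \<open>Generators are indexed i = 1..n-k, frames j = 1..l i; outside this range h_{i,j} = I.\<close>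
definition hext :: "(nat \<Rightarrow> nat \<Rightarrow> pauli) \<Rightarrow> (nat \<Rightarrow> nat) \<Rightarrow> nat \<Rightarrow> nat \<Rightarrow> pauli" where
  "hext h l i j = (if 1 \<le> j \<and> j \<le> l i then h i j else pI)"

definition valid_qcc :: "nat \<Rightarrow> nat \<Rightarrow> (nat \<Rightarrow> nat \<Rightarrow> pauli) \<Rightarrow> (nat \<Rightarrow> nat) \<Rightarrow> bool" where
  "valid_qcc n k h l \<longleftrightarrow>
     k \<le> n \<and>
     (\<forall>i\<in>{1..n-k}. 1 \<le> l i \<and> (\<forall>j\<in>{1..l i}. is_pauli n (h i j))) \<and>
     (\<forall>i\<in>{1..n-k}. \<forall>i'\<in>{1..n-k}. \<forall>t::nat.
        even (\<Sum>r\<in>{1..l i'}. sp n (hext h l i (r + t)) (hext h l i' r)))"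

definition omega_idx :: "nat \<Rightarrow> (nat \<Rightarrow> nat) \<Rightarrow> (nat \<times> nat) list" where
  "omega_idx nk l = concat (map (\<lambda>i. map (\<lambda>j. (i, j)) [1..<l i]) [1..<nk + 1])"

definition omega_entry :: "nat \<Rightarrow> (nat \<Rightarrow> nat \<Rightarrow> pauli) \<Rightarrow> (nat \<Rightarrow> nat) \<Rightarrow>
    nat \<times> nat \<Rightarrow> nat \<times> nat \<Rightarrow> bit" where
  "omega_entry n h l a b =
     (let (i, j) = a; (i', j') = b in
      if j' \<le> j then of_nat (\<Sum>r\<in>{1..l i}. sp n (hext h l i (j + r)) (hext h l i' (j' + r)))
      else of_nat (\<Sum>r\<in>{1..l i'}. sp n (hext h l i' (j' + r)) (hext h l i (j + r))))"

definition omega_dim :: "nat \<Rightarrow> (nat \<Rightarrow> nat) \<Rightarrow> nat" where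
  "omega_dim nk l = length (omega_idx nk l)"

definition Omega :: "nat \<Rightarrow> nat \<Rightarrow> (nat \<Rightarrow> nat \<Rightarrow> pauli) \<Rightarrow> (nat \<Rightarrow> nat) \<Rightarrow> bit mat" where
  "Omega n k h l =
     (let ix = omega_idx (n - k) l; D = length ix in
      mat D D (\<lambda>(a, b). omega_entry n h l (ix ! a) (ix ! b)))"

definition Omega_rank :: "nat \<Rightarrow> nat \<Rightarrow> (nat \<Rightarrow> nat \<Rightarrow> pauli) \<Rightarrow> (nat \<Rightarrow> nat) \<Rightarrow> nat" where
  "Omega_rank n k h l = vec_space.rank (omega_dim (n - k) l) (Omega n k h l)"

definition gext :: "(nat \<Rightarrow> nat \<Rightarrow> pauli) \<Rightarrow> (nat \<Rightarrow> nat) \<Rightarrow> nat \<Rightarrow> nat \<Rightarrow> pauli" where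
  "gext g l i j = (if 1 \<le> j \<and> j < l i then g i j else pI)"

text \<open>U acts on m memory, n-k ancilla and k information qubits (in this order) and outputs
  n physical and m memory qubits (in this order).\<close>
definition implements_encoding :: "nat \<Rightarrow> nat \<Rightarrow> nat \<Rightarrow> (nat \<Rightarrow> nat \<Rightarrow> pauli) \<Rightarrow> (nat \<Rightarrow> nat)
    \<Rightarrow> (nat \<Rightarrow> nat \<Rightarrow> pauli) \<Rightarrow> (pauli \<Rightarrow> pauli) \<Rightarrow> bool" where
  "implements_encoding n k m h l g U \<longleftrightarrow>
     clifford (m + n) U \<and>
     (\<forall>i\<in>{1..n-k}. \<forall>j<l i.
        U (tensor m (gext g l i j) (tensor (n - k) (if j = 0 then Zop (i - 1) else pI) pI))
          = tensor n (hext h l i (j + 1)) (gext g l i (j + 1)))"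

definition sd_edge :: "nat \<Rightarrow> nat \<Rightarrow> nat \<Rightarrow> (pauli \<Rightarrow> pauli) \<Rightarrow> pauli \<Rightarrow> pauli \<Rightarrow> pauli \<Rightarrow> pauli \<Rightarrow> bool" where
  "sd_edge n k m U M M' L P \<longleftrightarrow>
     is_pauli m M \<and> is_pauli m M' \<and> is_pauli k L \<and> is_pauli n P \<and>
     (\<exists>S. is_Zstring (n - k) S \<and> U (tensor m M (tensor (n - k) S L)) = tensor n P M')"

definition catastrophic :: "nat \<Rightarrow> nat \<Rightarrow> nat \<Rightarrow> (pauli \<Rightarrow> pauli) \<Rightarrow> bool" where
  "catastrophic n k m U \<longleftrightarrow>
     (\<exists>p::nat. \<exists>M L P :: nat \<Rightarrow> pauli. 0 < p \<and> M p = M 0 \<and>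
        (\<forall>t<p. sd_edge n k m U (M t) (M (Suc t)) (L t) (P t) \<and> weight n (P t) = 0) \<and>
        (\<exists>t<p. weight k (L t) \<noteq> 0))"

end

theory Submission
  imports Defs
begin


lemma of_nat_bit_even: "even (x::nat) \<Longrightarrow> (of_nat x :: bit) = 0"
  by (metis dvd_def mult_2 of_nat_mult bit_2_eq_0 mult_zero_left of_nat_numeral)

lemma mod2_eqI: "(even (x::nat) = even y) \<Longrightarrow> x mod 2 = y mod 2"
  by (cases "even x") (auto simp: even_iff_mod_2_eq_zero odd_iff_mod_2_eq_one)
lemma card_symdiff_parity:
  assumes "finite A" "finite B"
  shows "odd (card ((A - B) \<union> (B - A))) = (odd (card A) \<noteq> odd (card B))"
proof -
  have eA: "A = (A - B) \<union> (A \<inter> B)" by blast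
  have eB: "B = (B - A) \<union> (A \<inter> B)" by blast
  have "card ((A - B) \<union> (A \<inter> B)) = card (A - B) + card (A \<inter> B)"
    using assms by (intro card_Un_disjoint) auto
  then have cA: "card A = card (A - B) + card (A \<inter> B)" using eA by simp
  have "card ((B - A) \<union> (A \<inter> B)) = card (B - A) + card (A \<inter> B)"
    using assms by (intro card_Un_disjoint) auto
  then have cB: "card B = card (B - A) + card (A \<inter> B)" using eB by simp
  have "card ((A - B) \<union> (B - A)) = card (A - B) + card (B - A)"
    using assms by (intro card_Un_disjoint) auto
  with cA cB show ?thesis by auto
qed

lemma sp_sym: "sp N P Q = sp N Q P"
proof -
  have "{i. i < N \<and> ((fst (P i) \<and> snd (Q i)) \<noteq> (snd (P i) \<and> fst (Q i)))}
      = {i. i < N \<and> ((fst (Q i) \<and> snd (P i)) \<noteq> (snd (Q i) \<and> fst (P i)))}" by auto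
  then show ?thesis unfolding sp_def by simp
qed

lemma sp_self: "sp N P P = 0"
proof -
  have "{i. i < N \<and> ((fst (P i) \<and> snd (P i)) \<noteq> (snd (P i) \<and> fst (P i)))} = {}" by auto
  then show ?thesis unfolding sp_def by (simp only:) simp
qed

lemma sp_pI: "sp N P pI = 0"
  unfolding sp_def pI_def by simp

lemma sp_pmul: "sp N P (pmul Q R) = (sp N P Q + sp N P R) mod 2"
proof -
  let ?a = "\<lambda>Q i. (fst (P i) \<and> snd (Q i)) \<noteq> (snd (P i) \<and> fst (Q i))"
  define A where "A = {i. i < N \<and> ?a Q i}"
  define B where "B = {i. i < N \<and> ?a R i}"
  have e: "{i. i < N \<and> ?a (pmul Q R) i} = (A - B) \<union> (B - A)"
    unfolding pmul_def A_def B_def by auto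
  have f: "finite A" "finite B" unfolding A_def B_def by auto
  have par: "odd (card ((A - B) \<union> (B - A))) = (odd (card A) \<noteq> odd (card B))"
    using card_symdiff_parity[OF f] .
  have m: "card ((A - B) \<union> (B - A)) mod 2 = (card A + card B) mod 2"
    by (rule mod2_eqI) (use par in auto)
  have g1: "sp N P (pmul Q R) = card ((A - B) \<union> (B - A)) mod 2" unfolding sp_def e by (rule refl)
  have g2: "sp N P Q = card A mod 2" unfolding sp_def A_def by (rule refl)
  have g3: "sp N P R = card B mod 2" unfolding sp_def B_def by (rule refl)
  show ?thesis unfolding g1 g2 g3 m by (rule mod_add_eq[symmetric])
qed

lemma sp_tensor: "sp (N1 + N2) (tensor N1 A B) (tensor N1 C D) = (sp N1 A C + sp N2 B D) mod 2"
proof -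
  let ?a = "\<lambda>P Q i. (fst (P i) \<and> snd (Q i)) \<noteq> (snd (P i) \<and> fst (Q i))"
  have e: "{i. i < N1 + N2 \<and> ?a (tensor N1 A B) (tensor N1 C D) i}
     = {i. i < N1 \<and> ?a A C i} \<union> (\<lambda>i. i + N1) ` {i. i < N2 \<and> ?a B D i}"
  proof -
    have "x \<in> {i. i < N1 + N2 \<and> ?a (tensor N1 A B) (tensor N1 C D) i} \<longleftrightarrow>
          x \<in> {i. i < N1 \<and> ?a A C i} \<union> (\<lambda>i. i + N1) ` {i. i < N2 \<and> ?a B D i}" for x
    proof (cases "x < N1")
      case True then show ?thesis by (auto simp: tensor_def)
    next
      case False
      then have "x = (x - N1) + N1" by simp
      then have "x \<in> (\<lambda>i. i + N1) ` {i. i < N2 \<and> ?a B D i} \<longleftrightarrow> x - N1 \<in> {i. i < N2 \<and> ?a B D i}"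
        by (metis (no_types, lifting) add_diff_cancel_right' image_iff)
      with False show ?thesis by (auto simp: tensor_def)
    qed
    then show ?thesis by blast
  qed
  have c: "card ({i. i < N1 \<and> ?a A C i} \<union> (\<lambda>i. i + N1) ` {i. i < N2 \<and> ?a B D i})
     = card {i. i < N1 \<and> ?a A C i} + card {i. i < N2 \<and> ?a B D i}"
    by (subst card_Un_disjoint) (auto simp: card_image inj_on_def)
  show ?thesis unfolding sp_def e c by (simp add: mod_add_eq)
qed


definition psum :: "('i \<Rightarrow> pauli) \<Rightarrow> 'i set \<Rightarrow> pauli" where
  "psum f C = (\<lambda>q. (odd (card {c\<in>C. fst (f c q)}), odd (card {c\<in>C. snd (f c q)})))"

lemma psum_empty: "psum f {} = pI"
  unfolding psum_def pI_def by simp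

lemma card_filter_insert: "finite C \<Longrightarrow> x \<notin> C \<Longrightarrow>
   card {c\<in>insert x C. Q c} = (if Q x then Suc (card {c\<in>C. Q c}) else card {c\<in>C. Q c})"
proof -
  assume a: "finite C" "x \<notin> C"
  show ?thesis
  proof (cases "Q x")
    case True
    then have "{c\<in>insert x C. Q c} = insert x {c\<in>C. Q c}" by auto
    with a True show ?thesis by simp
  next
    case False
    then have "{c\<in>insert x C. Q c} = {c\<in>C. Q c}" by auto
    with False show ?thesis by simp
  qed
qed

lemma psum_insert: "finite C \<Longrightarrow> x \<notin> C \<Longrightarrow> psum f (insert x C) = pmul (f x) (psum f C)"
proof (rule ext)
  fix q assume a: "finite C" "x \<notin> C"
  have h1: "card {c\<in>insert x C. fst (f c q)} = (if fst (f x q) then Suc (card {c\<in>C. fst (f c q)}) else card {c\<in>C. fst (f c q)})"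
    by (rule card_filter_insert[OF a])
  have h2: "card {c\<in>insert x C. snd (f c q)} = (if snd (f x q) then Suc (card {c\<in>C. snd (f c q)}) else card {c\<in>C. snd (f c q)})"
    by (rule card_filter_insert[OF a])
  show "psum f (insert x C) q = pmul (f x) (psum f C) q"
    unfolding psum_def pmul_def by (simp only: h1 h2) simp
qed

lemma psum_pauli: "finite C \<Longrightarrow> \<forall>c\<in>C. is_pauli m (f c) \<Longrightarrow> is_pauli m (psum f C)"
  unfolding is_pauli_def
proof (intro allI impI)
  fix i assume a: "\<forall>c\<in>C. \<forall>i. m \<le> i \<longrightarrow> f c i = (False, False)" "m \<le> i"
  then have e1: "{c\<in>C. fst (f c i)} = {}" and e2: "{c\<in>C. snd (f c i)} = {}" by auto
  show "psum f C i = (False, False)" unfolding psum_def by (simp only: e1 e2) simp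
qed

lemma sp_psum: "finite C \<Longrightarrow> sp N P (psum f C) = (\<Sum>c\<in>C. sp N P (f c)) mod 2"
proof (induction C rule: finite_induct)
  case empty then show ?case by (simp add: psum_empty sp_pI)
next
  case (insert x F)
  have "sp N P (psum f (insert x F)) = (sp N P (f x) + sp N P (psum f F)) mod 2"
    by (simp only: psum_insert[OF insert(1,2)] sp_pmul)
  also have "\<dots> = (sp N P (f x) + (\<Sum>c\<in>F. sp N P (f c)) mod 2) mod 2" using insert(3) by simp
  also have "\<dots> = (sp N P (f x) + (\<Sum>c\<in>F. sp N P (f c))) mod 2" by (rule mod_add_right_eq)
  also have "\<dots> = (\<Sum>c\<in>insert x F. sp N P (f c)) mod 2" by (simp only: sum.insert[OF insert(1,2)])
  finally show ?case .
qed

lemma psum_symdiff: "finite A \<Longrightarrow> finite B \<Longrightarrow>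
   psum f ((A - B) \<union> (B - A)) = pmul (psum f A) (psum f B)"
proof -
  assume f: "finite A" "finite B"
  have e: "{c\<in>(A - B) \<union> (B - A). Q c} = ({c\<in>A. Q c} - {c\<in>B. Q c}) \<union> ({c\<in>B. Q c} - {c\<in>A. Q c})" for Q
    by auto
  show ?thesis
  proof (rule ext)
    fix q
    have p1: "odd (card (({c\<in>A. fst (f c q)} - {c\<in>B. fst (f c q)}) \<union> ({c\<in>B. fst (f c q)} - {c\<in>A. fst (f c q)})))
       = (odd (card {c\<in>A. fst (f c q)}) \<noteq> odd (card {c\<in>B. fst (f c q)}))"
      by (rule card_symdiff_parity) (use f in auto)
    have p2: "odd (card (({c\<in>A. snd (f c q)} - {c\<in>B. snd (f c q)}) \<union> ({c\<in>B. snd (f c q)} - {c\<in>A. snd (f c q)})))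
       = (odd (card {c\<in>A. snd (f c q)}) \<noteq> odd (card {c\<in>B. snd (f c q)}))"
      by (rule card_symdiff_parity) (use f in auto)
    show "psum f ((A - B) \<union> (B - A)) q = pmul (psum f A) (psum f B) q"
      unfolding psum_def pmul_def by (simp only: e p1 p2) simp
  qed
qed

lemma pmul_self: "pmul P P = pI"
  unfolding pmul_def pI_def by simp

lemma pmul_pI: "pmul P pI = P"
  unfolding pmul_def pI_def by simp

lemma pmul_eq_pI: "pmul P Q = pI \<Longrightarrow> P = Q"
proof
  fix x assume h: "pmul P Q = pI"
  have "fst (P x) = fst (Q x)" "snd (P x) = snd (Q x)"
    using fun_cong[OF h, of x] unfolding pmul_def pI_def by auto
  then show "P x = Q x" by (simp add: prod_eq_iff)
qed

lemma paulis_card: "finite {P. is_pauli m P} \<and> card {P. is_pauli m P} \<le> 4 ^ m"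
proof (induction m)
  case 0
  have "{P. is_pauli 0 P} = {pI}" unfolding is_pauli_def pI_def by auto
  then show ?case by simp
next
  case (Suc m)
  let ?S = "{P. is_pauli m P}"
  let ?U = "UNIV :: (bool \<times> bool) set"
  have sub: "{P. is_pauli (Suc m) P} \<subseteq> (\<lambda>(x,P). P(m:=x)) ` (?U \<times> ?S)"
  proof
    fix P assume "P \<in> {P. is_pauli (Suc m) P}"
    then have "is_pauli m (P(m:=(False,False)))" unfolding is_pauli_def by auto
    moreover have "P = (P(m:=(False,False)))(m := P m)" by simp
    ultimately show "P \<in> (\<lambda>(x,P). P(m:=x)) ` (?U \<times> ?S)"
      by (intro image_eqI[of _ _ "(P m, P(m:=(False,False)))"]) auto
  qed
  have cU: "card ?U = 4" by (simp add: UNIV_Times_UNIV[symmetric] card_cartesian_product del: UNIV_Times_UNIV)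
  have fin: "finite (?U \<times> ?S)" by (intro finite_cartesian_product) (use Suc in auto)
  have "card ((\<lambda>(x,P). P(m:=x)) ` (?U \<times> ?S)) \<le> card (?U \<times> ?S)"
    using card_image_le fin by blast
  also have "\<dots> = card ?U * card ?S" by (rule card_cartesian_product)
  also have "\<dots> = 4 * card ?S" using cU by simp
  also have "\<dots> \<le> 4 * 4 ^ m" using Suc by simp
  finally have le: "card ((\<lambda>(x,P). P(m:=x)) ` (?U \<times> ?S)) \<le> 4 ^ Suc m" by simp
  have fi: "finite ((\<lambda>(x,P). P(m:=x)) ` (?U \<times> ?S))" using fin by (rule finite_imageI)
  have "card {P. is_pauli (Suc m) P} \<le> card ((\<lambda>(x,P). P(m:=x)) ` (?U \<times> ?S))"
    by (rule card_mono[OF fi sub])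
  with le have "card {P. is_pauli (Suc m) P} \<le> 4 ^ Suc m" by linarith
  moreover have "finite {P. is_pauli (Suc m) P}" using fi sub by (rule finite_subset[rotated])
  ultimately show ?case by blast
qed

lemma spanning:
  assumes fin: "finite I" and pa: "\<forall>c\<in>I. is_pauli m (f c)" and cardI: "2 * m \<le> card I"
    and ind: "\<forall>C\<subseteq>I. psum f C = pI \<longrightarrow> C = {}"
    and P: "is_pauli m P"
  shows "\<exists>C\<subseteq>I. psum f C = P"
proof -
  have inj: "inj_on (psum f) (Pow I)"
  proof (rule inj_onI)
    fix A B assume A: "A \<in> Pow I" and B: "B \<in> Pow I" and e: "psum f A = psum f B"
    have fA: "finite A" "finite B" using A B fin finite_subset by auto
    have "psum f ((A - B) \<union> (B - A)) = pI" using psum_symdiff[OF fA] e pmul_self by simp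
    have sd: "(A - B) \<union> (B - A) \<subseteq> I" using A B by auto
    have "(A - B) \<union> (B - A) = {}" using ind[rule_format, OF sd] \<open>psum f ((A - B) \<union> (B - A)) = pI\<close> by simp
    then show "A = B" by auto
  qed
  have c1: "card (psum f ` Pow I) = 2 ^ card I" using card_image[OF inj] card_Pow[OF fin] by simp
  have sub: "psum f ` Pow I \<subseteq> {P. is_pauli m P}"
  proof
    fix x assume "x \<in> psum f ` Pow I"
    then obtain C where C: "C \<subseteq> I" "x = psum f C" by auto
    have "finite C" using C(1) fin by (rule finite_subset)
    moreover have "\<forall>c\<in>C. is_pauli m (f c)" using C(1) pa by blast
    ultimately show "x \<in> {P. is_pauli m P}" using C(2) psum_pauli by blast
  qed
  have "(4::nat) ^ m \<le> 2 ^ card I"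
  proof -
    have "(4::nat) ^ m = 2 ^ (2 * m)" by (simp add: power_mult)
    also have "\<dots> \<le> 2 ^ card I" using cardI by (rule power_increasing) simp
    finally show ?thesis .
  qed
  then have "card {P. is_pauli m P} \<le> card (psum f ` Pow I)" using paulis_card[THEN conjunct2, of m] c1 by linarith
  then have "psum f ` Pow I = {P. is_pauli m P}" by (intro card_seteq[OF paulis_card[THEN conjunct1] sub])
  then have "P \<in> psum f ` Pow I" using P by simp
  then obtain C where "C \<in> Pow I" "P = psum f C" by (rule imageE)
  then show ?thesis by auto
qed

lemma ortho_pI:
  assumes M: "is_pauli m M" and o: "\<forall>P. is_pauli m P \<longrightarrow> sp m M P = 0"
  shows "M = pI"
proof (rule ccontr)
  assume "M \<noteq> pI"
  then obtain q where q: "M q \<noteq> (False, False)" unfolding pI_def by auto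
  then have qm: "q < m" using M unfolding is_pauli_def by (meson not_le)
  define X where "X = (\<lambda>i. if i = q then (True, False) else (False, False))"
  define Z where "Z = (\<lambda>i. if i = q then (False, True) else (False, False))"
  have "is_pauli m X" "is_pauli m Z" unfolding is_pauli_def X_def Z_def using qm by auto
  then have "sp m M X = 0" "sp m M Z = 0" using o by auto
  show False
  proof (cases "snd (M q)")
    case True
    have "{i. i < m \<and> ((fst (M i) \<and> snd (X i)) \<noteq> (snd (M i) \<and> fst (X i)))} = {q}"
      unfolding X_def using True qm by auto
    then have "sp m M X = 1" unfolding sp_def by simp
    with \<open>sp m M X = 0\<close> show False by simp
  next
    case False
    then have "fst (M q)" using q by (metis prod.collapse)
    have "{i. i < m \<and> ((fst (M i) \<and> snd (Z i)) \<noteq> (snd (M i) \<and> fst (Z i)))} = {q}"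
      unfolding Z_def using \<open>fst (M q)\<close> qm by auto
    then have "sp m M Z = 1" unfolding sp_def by simp
    with \<open>sp m M Z = 0\<close> show False by simp
  qed
qed



lemma Omega_nonsing:
  assumes "(A :: bit mat) \<in> carrier_mat D D" and "vec_space.rank D A = D"
  shows "\<forall>v\<in>carrier_vec D. A *\<^sub>v v = 0\<^sub>v D \<longrightarrow> v = 0\<^sub>v D"
proof -
  have "det A \<noteq> 0" using vec_space.det_rank_iff[OF assms(1)] assms(2) by simp
  then show ?thesis using det_0_iff_vec_prod_zero_field[OF assms(1)] by blast
qed

lemma nonsing_indep:
  assumes Om: "(Om :: bit mat) \<in> carrier_mat D D"
    and nons: "\<forall>v\<in>carrier_vec D. Om *\<^sub>v v = 0\<^sub>v D \<longrightarrow> v = 0\<^sub>v D"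
    and ent: "\<forall>b<D. \<forall>c<D. Om $$ (b,c) = of_nat (sp m (f b) (f c))"
    and C: "C \<subseteq> {..<D}"
    and ev: "\<forall>b<D. even (\<Sum>c\<in>C. sp m (f b) (f c))"
  shows "C = {}"
proof (rule ccontr)
  assume ne: "C \<noteq> {}"
  define v where "v = vec D (\<lambda>c. if c \<in> C then (1::bit) else 0)"
  have vc: "v \<in> carrier_vec D" unfolding v_def by simp
  have "Om *\<^sub>v v = 0\<^sub>v D"
  proof (rule eq_vecI)
    show "dim_vec (Om *\<^sub>v v) = dim_vec (0\<^sub>v D)" using Om by simp
    fix b assume "b < dim_vec (0\<^sub>v D)"
    then have b: "b < D" by simp
    have "(Om *\<^sub>v v) $ b = row Om b \<bullet> v" using Om b by simp
    also have "\<dots> = (\<Sum>c\<in>{0..<D}. row Om b $ c * v $ c)" unfolding scalar_prod_def using vc by simp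
    also have "\<dots> = (\<Sum>c\<in>{0..<D}. Om $$ (b,c) * v $ c)"
      by (rule sum.cong) (use Om b in auto)
    also have "\<dots> = (\<Sum>c\<in>{0..<D}. if c \<in> C then Om $$ (b,c) else 0)"
      by (rule sum.cong) (auto simp: v_def)
    also have "\<dots> = (\<Sum>c\<in>{0..<D} \<inter> C. Om $$ (b,c))"
      by (simp add: sum.inter_restrict)
    also have "{0..<D} \<inter> C = C" using C by auto
    also have "(\<Sum>c\<in>C. Om $$ (b,c)) = (\<Sum>c\<in>C. of_nat (sp m (f b) (f c)))"
      by (rule sum.cong) (use C b ent in auto)
    also have "\<dots> = of_nat (\<Sum>c\<in>C. sp m (f b) (f c))" by simp
    also have "\<dots> = 0" using ev b of_nat_bit_even by blast
    finally show "(Om *\<^sub>v v) $ b = 0\<^sub>v D $ b" using b by simp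
  qed
  then have "v = 0\<^sub>v D" using nons vc by blast
  moreover obtain c where "c \<in> C" using ne by blast
  then have "v $ c = 1" "c < D" using C unfolding v_def by auto
  ultimately show False by simp
qed


lemma tensor_pauli: "is_pauli N1 A \<Longrightarrow> is_pauli N2 B \<Longrightarrow> is_pauli (N1 + N2) (tensor N1 A B)"
  unfolding is_pauli_def tensor_def by auto

lemma pI_pauli: "is_pauli N pI"
  unfolding is_pauli_def pI_def by simp

lemma Zop_pauli: "a < N \<Longrightarrow> is_pauli N (Zop a)"
  unfolding is_pauli_def Zop_def by auto

lemma sp_lt2: "sp N P Q < 2"
  unfolding sp_def by simp

lemma sp_Zs: "(\<forall>i. \<not> fst (S i)) \<Longrightarrow> (\<forall>i. \<not> fst (T i)) \<Longrightarrow> sp N S T = 0"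
proof -
  assume a: "\<forall>i. \<not> fst (S i)" "\<forall>i. \<not> fst (T i)"
  then have e: "{i. i < N \<and> ((fst (S i) \<and> snd (T i)) \<noteq> (snd (S i) \<and> fst (T i)))} = {}" by auto
  show ?thesis unfolding sp_def by (simp only: e) simp
qed

lemma tensor_pI: "tensor N pI pI = pI"
  unfolding tensor_def pI_def by auto

lemma weight0: "is_pauli N P \<Longrightarrow> weight N P = 0 \<Longrightarrow> P = pI"
proof -
  assume a: "is_pauli N P" "weight N P = 0"
  have "finite {i. i < N \<and> P i \<noteq> (False, False)}" by simp
  then have e: "{i. i < N \<and> P i \<noteq> (False, False)} = {}" using a(2) unfolding weight_def by simp
  show "P = pI"
  proof
    fix i show "P i = pI i"
      using a(1) e unfolding is_pauli_def pI_def by (cases "i < N") auto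
  qed
qed

lemma mem_omega_idx: "x \<in> set (omega_idx nk l) \<longleftrightarrow> 1 \<le> fst x \<and> fst x \<le> nk \<and> 1 \<le> snd x \<and> snd x < l (fst x)"
  unfolding omega_idx_def by (cases x) auto



theorem theorem3:
  fixes n k m :: nat
    and h g :: "nat \<Rightarrow> nat \<Rightarrow> pauli"
    and l :: "nat \<Rightarrow> nat"
    and U :: "pauli \<Rightarrow> pauli"
  assumes valid: "valid_qcc n k h l"
    and full_rank: "Omega_rank n k h l = omega_dim (n - k) l"
    and m_def: "m = omega_dim (n - k) l - Omega_rank n k h l div 2"
    and g_pauli: "\<forall>i\<in>{1..n-k}. \<forall>j\<in>{1..<l i}. is_pauli m (g i j)"
    and g_comm: "\<forall>a\<in>set (omega_idx (n - k) l). \<forall>b\<in>set (omega_idx (n - k) l).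
                   of_nat (sp m (g (fst a) (snd a)) (g (fst b) (snd b))) = omega_entry n h l a b"
    and enc: "implements_encoding n k m h l g U"
  shows "\<not> catastrophic n k m U"
proof
  assume "catastrophic n k m U"
  then obtain p M L P where p: "0 < p" "M p = M 0"
    and edges: "\<forall>t<p. sd_edge n k m U (M t) (M (Suc t)) (L t) (P t) \<and> weight n (P t) = 0"
    and bad: "\<exists>t<p. weight k (L t) \<noteq> 0"
    unfolding catastrophic_def by blast
  from valid have kn: "k \<le> n" unfolding valid_qcc_def by simp
  have mn: "m + n = m + ((n - k) + k)" using kn by simp
  have cl: "clifford (m + n) U" using enc unfolding implements_encoding_def by simp
  have encg: "\<forall>i\<in>{1..n-k}. \<forall>j<l i.
        U (tensor m (gext g l i j) (tensor (n - k) (if j = 0 then Zop (i - 1) else pI) pI))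
          = tensor n (hext h l i (j + 1)) (gext g l i (j + 1))"
    using enc unfolding implements_encoding_def by simp
  have spU: "sp (m + n) (U X) (U Y) = sp (m + n) X Y" if "is_pauli (m + n) X" "is_pauli (m + n) Y" for X Y
    using cl that unfolding clifford_def by blast
  have gext_pauli: "is_pauli m (gext g l i j)" if "i \<in> {1..n-k}" for i j
    using g_pauli that unfolding gext_def by (auto simp: pI_pauli)
  have E: "is_pauli m (M t) \<and> is_pauli m (M (Suc t)) \<and> is_pauli k (L t) \<and>
      (\<exists>S. is_Zstring (n - k) S \<and> U (tensor m (M t) (tensor (n - k) S (L t))) = tensor n pI (M (Suc t)))"
    if "t < p" for t
  proof -
    from edges that have e: "sd_edge n k m U (M t) (M (Suc t)) (L t) (P t)" "weight n (P t) = 0" by auto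
    then have "P t = pI" using weight0 unfolding sd_edge_def by blast
    with e show ?thesis unfolding sd_edge_def by auto
  qed
  have step: "sp m (M t) (gext g l i j) = sp m (M (Suc t)) (gext g l i (j + 1))"
    if tp: "t < p" and ii: "i \<in> {1..n-k}" and jj: "j < l i" for t i j
  proof -
    obtain S where S: "is_Zstring (n - k) S"
      "U (tensor m (M t) (tensor (n - k) S (L t))) = tensor n pI (M (Suc t))"
      using E[OF tp] by blast
    define Z where "Z = (if j = 0 then Zop (i - 1) else pI)"
    let ?X = "tensor m (M t) (tensor (n - k) S (L t))"
    let ?Y = "tensor m (gext g l i j) (tensor (n - k) Z pI)"
    have UY: "U ?Y = tensor n (hext h l i (j + 1)) (gext g l i (j + 1))"
      using encg ii jj unfolding Z_def by blast
    have Zp: "is_pauli (n - k) Z" unfolding Z_def using ii by (auto intro: Zop_pauli pI_pauli)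
    have Zf: "\<forall>i. \<not> fst (Z i)" unfolding Z_def Zop_def pI_def by auto
    have Sf: "\<forall>i. \<not> fst (S i)" using S(1) unfolding is_Zstring_def by simp
    have Sp: "is_pauli (n - k) S" using S(1) unfolding is_Zstring_def by simp
    have Xp: "is_pauli (m + n) ?X"
      using tensor_pauli[of m "M t" "(n - k) + k", unfolded mn[symmetric]] tensor_pauli[OF Sp, of k "L t"]
        E[OF tp] by blast
    have Yp: "is_pauli (m + n) ?Y"
      using tensor_pauli[of m "gext g l i j" "(n - k) + k", unfolded mn[symmetric]]
        tensor_pauli[OF Zp pI_pauli[of k]] gext_pauli[OF ii] by blast
    have "sp (m + n) (U ?X) (U ?Y) = sp (m + n) ?X ?Y" by (rule spU[OF Xp Yp])
    moreover have "sp (m + n) (U ?X) (U ?Y) = sp m (M (Suc t)) (gext g l i (j + 1))"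
    proof -
      have "sp (m + n) (U ?X) (U ?Y) = sp (m + n) (tensor n pI (M (Suc t))) (tensor n (hext h l i (j + 1)) (gext g l i (j + 1)))"
        using S(2) UY by simp
      also have "\<dots> = (sp n pI (hext h l i (j + 1)) + sp m (M (Suc t)) (gext g l i (j + 1))) mod 2"
        by (rule sp_tensor[of n m, unfolded add.commute[of n m]])
      also have "\<dots> = sp m (M (Suc t)) (gext g l i (j + 1))"
        using sp_sym[of n pI] sp_pI sp_lt2[of m "M (Suc t)" "gext g l i (j + 1)"] by simp
      finally show ?thesis .
    qed
    moreover have "sp (m + n) ?X ?Y = sp m (M t) (gext g l i j)"
    proof -
      have "sp (m + n) ?X ?Y = (sp m (M t) (gext g l i j) + sp ((n - k) + k) (tensor (n - k) S (L t)) (tensor (n - k) Z pI)) mod 2"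
        by (rule sp_tensor[of m "(n - k) + k", unfolded mn[symmetric]])
      also have "sp ((n - k) + k) (tensor (n - k) S (L t)) (tensor (n - k) Z pI) = (sp (n - k) S Z + sp k (L t) pI) mod 2"
        by (rule sp_tensor)
      also have "\<dots> = 0" using sp_Zs[OF Sf Zf] sp_pI by simp
      finally show ?thesis using sp_lt2[of m "M t" "gext g l i j"] by simp
    qed
    ultimately show ?thesis by simp
  qed
  define Mp where "Mp t = M (t mod p)" for t
  have Mpstep: "sp m (Mp t) (gext g l i j) = sp m (Mp (Suc t)) (gext g l i (j + 1))"
    if "i \<in> {1..n-k}" "j < l i" for t i j
  proof -
    have tp: "t mod p < p" using p by simp
    have "Mp (Suc t) = M (Suc (t mod p))"
    proof (cases "Suc (t mod p) = p")
      case True then have "Suc t mod p = 0" by (simp add: mod_Suc)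
      then show ?thesis using True p unfolding Mp_def by simp
    next
      case False then have "Suc t mod p = Suc (t mod p)" by (simp add: mod_Suc)
      then show ?thesis unfolding Mp_def by simp
    qed
    then show ?thesis using step[OF tp that] unfolding Mp_def by simp
  qed
  have zero: "\<forall>t. sp m (Mp t) (gext g l i j) = 0" if iin: "i \<in> {1..n-k}" for i j
  proof (induction j)
    case 0 show ?case unfolding gext_def by (simp add: sp_pI)
  next
    case (Suc j)
    show ?case
    proof
      fix t
      show "sp m (Mp t) (gext g l i (Suc j)) = 0"
      proof (cases "j < l i")
        case True
        have e: "Mp t = Mp (Suc (t + p - 1))" using p unfolding Mp_def by simp
        show ?thesis using Mpstep[OF iin True, of "t + p - 1"] Suc.IH e by simp
      next
        case False then show ?thesis unfolding gext_def by (simp add: sp_pI)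
      qed
    qed
  qed
  let ?ix = "omega_idx (n - k) l"
  define D where "D = length ?ix"
  have Om: "Omega n k h l \<in> carrier_mat D D" unfolding Omega_def D_def Let_def by simp
  have rk: "vec_space.rank D (Omega n k h l) = D"
    using full_rank unfolding Omega_rank_def omega_dim_def D_def by simp
  note nons = Omega_nonsing[OF Om rk]
  have md: "m = D - D div 2" using m_def full_rank unfolding omega_dim_def D_def by simp
  have cardD: "2 * m \<le> card {..<Suc D}" using md by simp
  have ixmem: "?ix ! c \<in> set ?ix" if "c < D" for c using that unfolding D_def by simp
  have memc: "1 \<le> fst (?ix ! c) \<and> fst (?ix ! c) \<le> n - k \<and> 1 \<le> snd (?ix ! c) \<and> snd (?ix ! c) < l (fst (?ix ! c))"
    if "c < D" for c using ixmem[OF that] mem_omega_idx by blast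
  have Mt: "M t = pI" if tp: "t < p" for t
  proof (rule ccontr)
    assume ne: "M t \<noteq> pI"
    define f where "f c = (if c < D then g (fst (?ix ! c)) (snd (?ix ! c)) else M t)" for c
    have Mtp: "is_pauli m (M t)" using E[OF tp] by simp
    have orth: "sp m (M t) (f c) = 0" if "c < D" for c
    proof -
      have mem: "fst (?ix ! c) \<in> {1..n-k}" using memc[OF that] by simp
      have "Mp t = M t" unfolding Mp_def using tp by simp
      then show ?thesis using zero[OF mem, rule_format, of t "snd (?ix ! c)"] memc[OF that] that
        unfolding f_def gext_def by simp
    qed
    have fp: "\<forall>c\<in>{..<Suc D}. is_pauli m (f c)"
    proof
      fix c assume "c \<in> {..<Suc D}"
      show "is_pauli m (f c)"
      proof (cases "c < D")
        case True then show ?thesis using memc[OF True] g_pauli unfolding f_def by auto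
      next
        case False then show ?thesis using Mtp unfolding f_def by simp
      qed
    qed
    have ent: "\<forall>b<D. \<forall>c<D. Omega n k h l $$ (b, c) = of_nat (sp m (f b) (f c))"
    proof (intro allI impI)
      fix b c assume b: "b < D" and c: "c < D"
      have "Omega n k h l $$ (b, c) = omega_entry n h l (?ix ! b) (?ix ! c)"
        unfolding Omega_def Let_def D_def using b c unfolding D_def by simp
      also have "\<dots> = of_nat (sp m (f b) (f c))"
        using g_comm ixmem[OF b] ixmem[OF c] b c unfolding f_def by simp
      finally show "Omega n k h l $$ (b, c) = of_nat (sp m (f b) (f c))" .
    qed
    have indep: "\<forall>C\<subseteq>{..<Suc D}. psum f C = pI \<longrightarrow> C = {}"
    proof (intro allI impI)
      fix C assume C: "C \<subseteq> {..<Suc D}" and ps: "psum f C = pI"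
      define C' where "C' = C - {D}"
      have C'sub: "C' \<subseteq> {..<D}" using C unfolding C'_def by auto
      have fC': "finite C'" using C'sub finite_subset by blast
      have ps': "psum f C' = (if D \<in> C then M t else pI)"
      proof (cases "D \<in> C")
        case True
        then have "C = insert D C'" unfolding C'_def by auto
        moreover have "D \<notin> C'" unfolding C'_def by simp
        ultimately have "pmul (f D) (psum f C') = pI" using ps psum_insert[OF fC', of D f] by simp
        then have "f D = psum f C'" by (rule pmul_eq_pI)
        then show ?thesis using True unfolding f_def by simp
      next
        case False then have "C' = C" unfolding C'_def by auto
        then show ?thesis using ps False by simp
      qed
      have ev: "\<forall>b<D. even (\<Sum>c\<in>C'. sp m (f b) (f c))"
      proof (intro allI impI)
        fix b assume b: "b < D"
        have "(\<Sum>c\<in>C'. sp m (f b) (f c)) mod 2 = sp m (f b) (psum f C')" using sp_psum[OF fC'] by simp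
        also have "\<dots> = 0" using ps' orth[OF b] sp_sym[of m "f b" "M t"] sp_pI by (cases "D \<in> C") auto
        finally show "even (\<Sum>c\<in>C'. sp m (f b) (f c))" by (simp add: even_iff_mod_2_eq_zero)
      qed
      have "C' = {}" by (rule nonsing_indep[OF Om nons ent C'sub ev])
      then have p0: "psum f C' = pI" by (simp add: psum_empty)
      show "C = {}"
      proof (cases "D \<in> C")
        case True then show ?thesis using ps' p0 ne by simp
      next
        case False then show ?thesis using \<open>C' = {}\<close> unfolding C'_def by auto
      qed
    qed
    have allp: "\<forall>Q. is_pauli m Q \<longrightarrow> sp m (M t) Q = 0"
    proof (intro allI impI)
      fix Q assume Q: "is_pauli m Q"
      obtain C where C: "C \<subseteq> {..<Suc D}" "psum f C = Q"
        using spanning[OF _ fp cardD indep Q] by auto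
      have fC: "finite C" using C(1) finite_subset by blast
      have "sp m (M t) Q = (\<Sum>c\<in>C. sp m (M t) (f c)) mod 2" using sp_psum[OF fC, of m "M t" f] C(2) by simp
      also have "(\<Sum>c\<in>C. sp m (M t) (f c)) = 0"
      proof (rule sum.neutral, rule ballI)
        fix c assume "c \<in> C"
        then have "c < Suc D" using C(1) by auto
        show "sp m (M t) (f c) = 0"
        proof (cases "c < D")
          case True then show ?thesis by (rule orth)
        next
          case False then show ?thesis unfolding f_def by (simp add: sp_self)
        qed
      qed
      finally show "sp m (M t) Q = 0" by simp
    qed
    have "M t = pI" by (rule ortho_pI[OF Mtp allp])
    with ne show False by simp
  qed
  obtain t where t: "t < p" "weight k (L t) \<noteq> 0" using bad by blast
  obtain S where S: "is_Zstring (n - k) S"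
      "U (tensor m (M t) (tensor (n - k) S (L t))) = tensor n pI (M (Suc t))"
    using E[OF t(1)] by blast
  have MS: "M (Suc t) = pI"
  proof (cases "Suc t < p")
    case True then show ?thesis by (rule Mt)
  next
    case False then have "Suc t = p" using t(1) by simp
    then show ?thesis using p Mt[OF p(1)] by simp
  qed
  let ?X = "tensor m pI (tensor (n - k) S (L t))"
  have UX: "U ?X = pI" using S(2) Mt[OF t(1)] MS tensor_pI by simp
  have U0: "U pI = pI"
  proof -
    have "U (pmul pI pI) = pmul (U pI) (U pI)" using cl pI_pauli unfolding clifford_def by blast
    then show ?thesis by (simp add: pmul_self)
  qed
  have Sp: "is_pauli (n - k) S" using S(1) unfolding is_Zstring_def by simp
  have Xp: "is_pauli (m + n) ?X"
    using tensor_pauli[of m pI "(n - k) + k", unfolded mn[symmetric]] tensor_pauli[OF Sp, of k "L t"]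
      E[OF t(1)] pI_pauli by blast
  have inj: "inj_on U {P. is_pauli (m + n) P}" using cl unfolding clifford_def using bij_betw_imp_inj_on by blast
  have "?X = pI"
  proof (rule inj_onD[OF inj])
    show "U ?X = U pI" using UX U0 by simp
    show "?X \<in> {P. is_pauli (m + n) P}" using Xp by simp
    show "pI \<in> {P. is_pauli (m + n) P}" using pI_pauli by simp
  qed
  have Lt: "L t = pI"
  proof
    fix i show "L t i = pI i"
    proof (cases "i < k")
      case True
      have "?X (m + (n - k) + i) = L t i" unfolding tensor_def by simp
      then show ?thesis using \<open>?X = pI\<close> unfolding pI_def by simp
    next
      case False then show ?thesis using E[OF t(1)] unfolding is_pauli_def pI_def by simp
    qed
  qed
  have "weight k pI = 0" unfolding weight_def pI_def by simp
  with t(2) Lt show False by simp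
qed


end
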